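(* Regard $\mathbb{I}=[0,1]$ as a $\mathbb{U}$-poset with action given by evaluation. Then for all $a,b,r\in\mathbb{I}$: $a\le_r b$ iff $a\le b\dotplus r$. Consequently $\rho(a,b)=a\dotminus b$ and $\mathrm{dist}(a,b)=|a-b|$.
   Context: $\mathbb{U}$ is the monoid (under composition) of surjective monotone maps $\mathbb{I}\to\mathbb{I}$. $\dotplus,\dotminus$ denote truncated addition and subtraction on $\mathbb{I}$ ($s\dotplus t=\min(s+t,1)$, $s\dotminus t=\max(s-t,0)$). In a $\mathbb{U}$-poset $A$ (poset with a $\mathbb{U}$-action monotone in both variables), $a\le_r b$ means: for all $u,v\in\mathbb{U}$ with $u(t\dotplus r)\le v(t)$ for all $t\in\mathbb{I}$, $u(a)\le v(b)$. $\rho(a,b):=\bigwedge\{r\in\mathbb{I}\mid a\le_r b\}$, $\mathrm{dist}(a,b):=\rho(a,b)\vee\rho(b,a)$. *)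

theory Defs
  imports Complex_Main
begin

text \<open>The monoid U: surjective monotone maps I -> I (only their values on I matter).\<close>
definition UU :: "(real \<Rightarrow> real) set" where
  "UU = {u. u ` {0..1} = {0..1} \<and> mono_on {0..1} u}"

definition tplus :: "real \<Rightarrow> real \<Rightarrow> real" where
  "tplus s t = min (s + t) 1"

definition tminus :: "real \<Rightarrow> real \<Rightarrow> real" where
  "tminus s t = max (s - t) 0"

definition le_r :: "((real \<Rightarrow> real) \<Rightarrow> 'a \<Rightarrow> 'a::order) \<Rightarrow> 'a \<Rightarrow> 'a \<Rightarrow> real \<Rightarrow> bool" where
  "le_r act a b r =
     (\<forall>u\<in>UU. \<forall>v\<in>UU. (\<forall>t\<in>{0..1}. u (tplus t r) \<le> v t) \<longrightarrow> act u a \<le> act v b)"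

definition rho :: "((real \<Rightarrow> real) \<Rightarrow> 'a \<Rightarrow> 'a::order) \<Rightarrow> 'a \<Rightarrow> 'a \<Rightarrow> real" where
  "rho act a b = Inf {r \<in> {0..1}. le_r act a b r}"

definition Udist :: "((real \<Rightarrow> real) \<Rightarrow> 'a \<Rightarrow> 'a::order) \<Rightarrow> 'a \<Rightarrow> 'a \<Rightarrow> real" where
  "Udist act a b = max (rho act a b) (rho act b a)"

definition evalact :: "(real \<Rightarrow> real) \<Rightarrow> real \<Rightarrow> real" where
  "evalact u x = u x"

end

theory Submission
  imports Defs
begin

lemma clamp_in_UU:
  fixes c d :: real
  assumes d: "d > 0" and c0: "0 \<le> c" and c1: "c + d \<le> 1"
  shows "(\<lambda>s. max 0 (min 1 ((s - c) / d))) \<in> UU"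
proof -
  let ?u = "\<lambda>s. max 0 (min 1 ((s - c) / d))"
  have img: "?u ` {0..1} = {0..1}"
  proof
    show "?u ` {0..1} \<subseteq> {0..1}" by auto
    show "{0..1} \<subseteq> ?u ` {0..1}"
    proof
      fix y :: real assume y: "y \<in> {0..1}"
      have "y * d \<le> 1 * d" using y d by (intro mult_right_mono) auto
      moreover have "0 \<le> y * d" using y d by simp
      ultimately have x: "c + y * d \<in> {0..1}" using c0 c1 by simp
      have e: "(c + y * d - c) / d = y" using d by simp
      have h: "?u (c + y * d) = y" unfolding e using y by auto
      show "y \<in> ?u ` {0..1}"
        by (rule image_eqI[where x="c + y * d"]) (use h x in simp_all)
    qed
  qed
  have mo: "mono_on {0..1} ?u"
  proof (rule mono_onI)
    fix x y :: real assume "x \<le> y"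
    hence "(x - c) / d \<le> (y - c) / d" using d by (intro divide_right_mono) auto
    thus "?u x \<le> ?u y" by (intro max.mono min.mono) auto
  qed
  show ?thesis unfolding UU_def using img mo by blast
qed

lemma le_r_iff:
  fixes a b r :: real
  assumes a: "a \<in> {0..1}" and b: "b \<in> {0..1}" and r: "r \<in> {0..1}"
  shows "le_r evalact a b r \<longleftrightarrow> a \<le> tplus b r"
proof
  assume h: "a \<le> tplus b r"
  show "le_r evalact a b r"
    unfolding le_r_def evalact_def
  proof (intro ballI impI)
    fix u v assume u: "u \<in> UU" and v: "v \<in> UU" and H: "\<forall>t\<in>{0..1}. u (tplus t r) \<le> v t"
    have mu: "mono_on {0..1} u" using u unfolding UU_def by auto
    have "tplus b r \<in> {0..1}" using b r unfolding tplus_def by auto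
    hence "u a \<le> u (tplus b r)" using mu a h by (meson mono_onD)
    also have "\<dots> \<le> v b" using H b by auto
    finally show "u a \<le> v b" .
  qed
next
  assume L: "le_r evalact a b r"
  show "a \<le> tplus b r"
  proof (rule ccontr)
    assume "\<not> a \<le> tplus b r"
    hence lt: "b + r < a" using a unfolding tplus_def by auto
    define c where "c = b + r"
    define d where "d = a - c"
    have d: "d > 0" using lt c_def d_def by auto
    define u where "u = (\<lambda>s. max 0 (min 1 ((s - c) / d)))"
    define v where "v = (\<lambda>s. max 0 (min 1 ((s - b) / d)))"
    have uU: "u \<in> UU" unfolding u_def
      by (rule clamp_in_UU) (use d b r a c_def d_def in auto)
    have vU: "v \<in> UU" unfolding v_def
      by (rule clamp_in_UU) (use d b r a c_def d_def in auto)
    have H: "\<forall>t\<in>{0..1}. u (tplus t r) \<le> v t"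
    proof
      fix t :: real assume t: "t \<in> {0..1}"
      have "(min (t + r) 1 - c) / d \<le> (t - b) / d"
        using d c_def by (intro divide_right_mono) auto
      thus "u (tplus t r) \<le> v t" unfolding u_def v_def tplus_def
        by (intro max.mono min.mono) auto
    qed
    have "u a \<le> v b" using L uU vU H unfolding le_r_def evalact_def by blast
    moreover have "u a = 1" using d unfolding u_def d_def by auto
    moreover have "v b = 0" unfolding v_def by auto
    ultimately show False by simp
  qed
qed

lemma rho_eq:
  fixes a b :: real
  assumes a: "a \<in> {0..1}" and b: "b \<in> {0..1}"
  shows "rho evalact a b = tminus a b"
proof -
  have "{r \<in> {0..1}. le_r evalact a b r} = {max (a - b) 0..1}"
    using a b by (auto simp: le_r_iff tplus_def)
  moreover have "max (a - b) 0 \<le> 1" using a b by auto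
  ultimately show ?thesis unfolding rho_def tminus_def by simp
qed

theorem proposition4p5:
  shows "\<forall>a\<in>{0..1::real}. \<forall>b\<in>{0..1::real}.
           (\<forall>r\<in>{0..1::real}. le_r evalact a b r \<longleftrightarrow> a \<le> tplus b r)
         \<and> rho evalact a b = tminus a b
         \<and> Udist evalact a b = \<bar>a - b\<bar>"
  by (auto simp: le_r_iff rho_eq Udist_def tminus_def)

end
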